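(* Let $\Delta$ be a finite, flag, simply connected simplicial complex, with $\mathcal{P}_H$, $L$ and $\Phi_n$ as in the context. Let $e\cdot f\cdot g$ be a combinatorial 1-cycle in $\Delta$. Then for every $n\in\mathbb{Z}$, $\mathrm{Area}_{\mathcal{P}_H}\big(\Phi_n(efg)\big)\le 3|n|^2+(3L+6)|n|+3$.
   Context: $\mathrm{Edge}(\Delta)$ is the set of directed edges of $\Delta$; for $e$ in it, $\iota e$, $\tau e$ are its initial and terminal vertices and $\overline{e}$ is the reversed edge. $e_1\cdot\ldots\cdot e_l$ is a combinatorial path if $\tau e_i=\iota e_{i+1}$, and a combinatorial 1-cycle if also $\tau e_l=\iota e_1$. $\mathcal{P}_H=\langle\mathrm{Edge}(\Delta)\mid\mathcal{R}_H\rangle$ where $\mathcal{R}_H$ consists of the words $e\overline{e}$ ($e\in\mathrm{Edge}(\Delta)$) and $efg$, $e^{-1}f^{-1}g^{-1}$ for every combinatorial 1-cycle $e\cdot f\cdot g$. $\mathrm{Area}_{\mathcal{P}_H}(w)$ is the least $m$ such that $w$ is freely equal to $\prod_{i=1}^m x_ir_ix_i^{-1}$ with $r_i\in\mathcal{R}_H^{\pm1}$. For a letter $e$ and $m\in\mathbb{Z}$, $e^m$ is the word of $m$ copies of $e$ if $m\ge0$ and $|m|$ copies of $e^{-1}$ if $m<0$. Fix a vertex $q$ and a spanning tree $T$ of the 1-skeleton of $\Delta$; $p_n(u,v)=e_1^n\cdots e_l^n$ where $e_1\cdot\ldots\cdot e_l$ is the unique geodesic combinatorial path in $T$ from $u$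 to $v$. $L$ is the maximum over vertices $u,v$ of their edge-path distance in $T$. $\Phi_n$ ($n\in\mathbb{Z}$) is the endomorphism of the free monoid on $\mathrm{Edge}(\Delta)^{\pm1}$ with $\Phi_n(e)=p_n(q,\iota e)\,e^{n+1}\,p_n(\tau e,q)$ and $\Phi_n(e^{-1})=\Phi_n(e)^{-1}$ (formal inverse word). *)

theory Defs
  imports "HOL-Analysis.Analysis" "HOL-Library.Extended_Nat"
begin

definition simplicial_complex :: "'v set set \<Rightarrow> bool" where
  "simplicial_complex \<Delta> \<longleftrightarrow>
     (\<forall>\<sigma>\<in>\<Delta>. finite \<sigma> \<and> \<sigma> \<noteq> {}) \<and>
     (\<forall>\<sigma>\<in>\<Delta>. \<forall>\<tau>. \<tau> \<subseteq> \<sigma> \<and> \<tau> \<noteq> {} \<longrightarrow> \<tau> \<in> \<Delta>)"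

definition vertices :: "'v set set \<Rightarrow> 'v set" where
  "vertices \<Delta> = {v. {v} \<in> \<Delta>}"

definition flag :: "'v set set \<Rightarrow> bool" where
  "flag \<Delta> \<longleftrightarrow> (\<forall>\<sigma>. finite \<sigma> \<and> \<sigma> \<noteq> {} \<and> \<sigma> \<subseteq> vertices \<Delta> \<and>
                 (\<forall>u\<in>\<sigma>. \<forall>v\<in>\<sigma>. u \<noteq> v \<longrightarrow> {u, v} \<in> \<Delta>) \<longrightarrow> \<sigma> \<in> \<Delta>)"

definition realization :: "('v::finite) set set \<Rightarrow> (real ^ 'v) set" where
  "realization \<Delta> = (\<Union>\<sigma>\<in>\<Delta>. convex hull ((\<lambda>v. axis v (1::real)) ` \<sigma>))"

type_synonym 'v edge = "'v \<times> 'v"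

definition Edge :: "'v set set \<Rightarrow> 'v edge set" where
  "Edge \<Delta> = {(u, v). u \<noteq> v \<and> {u, v} \<in> \<Delta>}"

abbreviation iota :: "'v edge \<Rightarrow> 'v" where "iota e \<equiv> fst e"
abbreviation tau :: "'v edge \<Rightarrow> 'v" where "tau e \<equiv> snd e"
definition rev_edge :: "'v edge \<Rightarrow> 'v edge" where "rev_edge e = (snd e, fst e)"

fun chain :: "'v edge list \<Rightarrow> bool" where
  "chain [] = True"
| "chain [e] = True"
| "chain (e # f # es) = (tau e = iota f \<and> chain (f # es))"

definition edge_path :: "'v edge set \<Rightarrow> 'v \<Rightarrow> 'v \<Rightarrow> 'v edge list \<Rightarrow> bool" where
  "edge_path E u v es \<longleftrightarrow> set es \<subseteq> E \<and> chain es \<and>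
     (if es = [] then u = v else iota (hd es) = u \<and> tau (last es) = v)"

definition comb_cycle3 :: "'v set set \<Rightarrow> 'v edge \<Rightarrow> 'v edge \<Rightarrow> 'v edge \<Rightarrow> bool" where
  "comb_cycle3 \<Delta> e f g \<longleftrightarrow> e \<in> Edge \<Delta> \<and> f \<in> Edge \<Delta> \<and> g \<in> Edge \<Delta> \<and>
     tau e = iota f \<and> tau f = iota g \<and> tau g = iota e"

fun no_backtrack :: "'v edge list \<Rightarrow> bool" where
  "no_backtrack [] = True"
| "no_backtrack [e] = True"
| "no_backtrack (e # f # es) = (f \<noteq> rev_edge e \<and> no_backtrack (f # es))"

definition spanning_tree :: "'v set set \<Rightarrow> 'v edge set \<Rightarrow> bool" where
  "spanning_tree \<Delta> T \<longleftrightarrow> T \<subseteq> Edge \<Delta> \<and> (\<forall>e\<in>T. rev_edge e \<in> T) \<and>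
     (\<forall>u\<in>vertices \<Delta>. \<forall>v\<in>vertices \<Delta>. \<exists>es. edge_path T u v es) \<and>
     (\<forall>u es. edge_path T u u es \<and> es \<noteq> [] \<longrightarrow> \<not> no_backtrack es)"

definition tree_geod :: "'v edge set \<Rightarrow> 'v \<Rightarrow> 'v \<Rightarrow> 'v edge list" where
  "tree_geod T u v = (THE es. edge_path T u v es \<and>
      (\<forall>es'. edge_path T u v es' \<longrightarrow> length es \<le> length es'))"

definition tree_diam :: "'v set set \<Rightarrow> 'v edge set \<Rightarrow> nat" where
  "tree_diam \<Delta> T = Max {length (tree_geod T u v) | u v. u \<in> vertices \<Delta> \<and> v \<in> vertices \<Delta>}"

text \<open>A letter is (e, True) for e and (e, False) for the formal inverse of e.\<close>
type_synonym 'a word = "('a \<times> bool) list"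

definition inv_word :: "'a word \<Rightarrow> 'a word" where
  "inv_word w = rev (map (\<lambda>(x, b). (x, \<not> b)) w)"

definition lpow :: "'a \<Rightarrow> int \<Rightarrow> 'a word" where
  "lpow x m = (if m \<ge> 0 then replicate (nat m) (x, True) else replicate (nat (- m)) (x, False))"

definition cancel_step :: "'a word \<Rightarrow> 'a word \<Rightarrow> bool" where
  "cancel_step w w' \<longleftrightarrow> (\<exists>xs ys x b. w = xs @ [(x, b), (x, \<not> b)] @ ys \<and> w' = xs @ ys)"

definition freely_eq :: "'a word \<Rightarrow> 'a word \<Rightarrow> bool" where
  "freely_eq = (sup cancel_step cancel_step\<inverse>\<inverse>)\<^sup>*\<^sup>*"

definition relators_H :: "'v set set \<Rightarrow> 'v edge word set" where
  "relators_H \<Delta> = {[(e, True), (rev_edge e, True)] | e. e \<in> Edge \<Delta>}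
     \<union> {[(e, True), (f, True), (g, True)] | e f g. comb_cycle3 \<Delta> e f g}
     \<union> {[(e, False), (f, False), (g, False)] | e f g. comb_cycle3 \<Delta> e f g}"

definition area_decomp :: "'a word set \<Rightarrow> 'a word \<Rightarrow> nat \<Rightarrow> bool" where
  "area_decomp R w m \<longleftrightarrow> (\<exists>cs. length cs = m \<and>
      (\<forall>(x, r)\<in>set cs. r \<in> R \<or> inv_word r \<in> R) \<and>
      freely_eq w (concat (map (\<lambda>(x, r). x @ r @ inv_word x) cs)))"

text \<open>Area (infinite if w is not null-homotopic).\<close>
definition Area :: "'a word set \<Rightarrow> 'a word \<Rightarrow> enat" where
  "Area R w = (INF m \<in> {m. area_decomp R w m}. enat m)"

definition p_path :: "'v edge set \<Rightarrow> int \<Rightarrow> 'v \<Rightarrow> 'v \<Rightarrow> 'v edge word" where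
  "p_path T n u v = concat (map (\<lambda>e. lpow e n) (tree_geod T u v))"

definition Phi_letter :: "'v edge set \<Rightarrow> 'v \<Rightarrow> int \<Rightarrow> 'v edge \<times> bool \<Rightarrow> 'v edge word" where
  "Phi_letter T q n l = (let e = fst l;
       w = p_path T n q (iota e) @ lpow e (n + 1) @ p_path T n (tau e) q
     in if snd l then w else inv_word w)"

definition Phi :: "'v edge set \<Rightarrow> 'v \<Rightarrow> int \<Rightarrow> 'v edge word \<Rightarrow> 'v edge word" where
  "Phi T q n w = concat (map (Phi_letter T q n) w)"

end

theory Submission
  imports Defs
begin

lemma fe_refl: "freely_eq w w"
  unfolding freely_eq_def by simp

lemma fe_cancel: "cancel_step w w' \<Longrightarrow> freely_eq w w'"
  unfolding freely_eq_def by (rule r_into_rtranclp) simp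

lemma fe_trans: "freely_eq u v \<Longrightarrow> freely_eq v w \<Longrightarrow> freely_eq u w"
  unfolding freely_eq_def by (rule rtranclp_trans)

lemma fe_sym: "freely_eq u v \<Longrightarrow> freely_eq v u"
  unfolding freely_eq_def
proof (induction rule: rtranclp_induct)
  case base then show ?case by simp
next
  case (step y z)
  from step.hyps(2) have "(sup cancel_step cancel_step\<inverse>\<inverse>) z y" by auto
  then show ?case using step.IH by (rule converse_rtranclp_into_rtranclp)
qed

lemma cs_intro: "w = xs @ [(x,b),(x,\<not>b)] @ ys \<Longrightarrow> w' = xs @ ys \<Longrightarrow> cancel_step w w'"
  by (auto simp: cancel_step_def)

lemma cs_ctx: "cancel_step w w' \<Longrightarrow> cancel_step (a@w@c) (a@w'@c)"
  unfolding cancel_step_def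
  apply (elim exE conjE)
  subgoal for xs ys x b
    by (rule exI[of _ "a@xs"], rule exI[of _ "ys@c"], rule exI[of _ x], rule exI[of _ b]) simp
  done

lemma fe_ctx: "freely_eq w w' \<Longrightarrow> freely_eq (a@w@c) (a@w'@c)"
  unfolding freely_eq_def
proof (induction rule: rtranclp_induct)
  case base then show ?case by simp
next
  case (step y z)
  from step.hyps(2) have "(sup cancel_step cancel_step\<inverse>\<inverse>) (a@y@c) (a@z@c)" by (auto intro: cs_ctx)
  with step.IH show ?case by (rule rtranclp.rtrancl_into_rtrancl)
qed

lemma fe_ctx': "freely_eq u u' \<Longrightarrow> w = a@u@c \<Longrightarrow> w' = a@u'@c \<Longrightarrow> freely_eq w w'"
  using fe_ctx by blast

lemma inv_word_Nil[simp]: "inv_word [] = []"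
  and inv_word_Cons[simp]: "inv_word (l#xs) = inv_word xs @ [(fst l, \<not> snd l)]"
  and inv_word_append[simp]: "inv_word (xs@ys) = inv_word ys @ inv_word xs"
  by (auto simp: inv_word_def split: prod.splits)

lemma inv_inv[simp]: "inv_word (inv_word x) = x"
  by (induction x) auto

lemma fe_inv_r: "freely_eq (x @ inv_word x) []"
proof (induction x)
  case Nil then show ?case by (simp add: fe_refl)
next
  case (Cons l xs)
  have 1: "freely_eq ((l#xs) @ inv_word (l#xs)) ([l] @ [] @ [(fst l, \<not> snd l)])"
    by (rule fe_ctx'[OF Cons.IH, where a="[l]" and c="[(fst l, \<not> snd l)]"]) simp_all
  have 2: "cancel_step ([l] @ [] @ [(fst l, \<not> snd l)]) []"
    by (rule cs_intro[where xs="[]" and ys="[]" and x="fst l" and b="snd l"]) simp_all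
  show ?case by (rule fe_trans[OF 1 fe_cancel[OF 2]])
qed

lemma fe_inv_l: "freely_eq (inv_word x @ x) []"
  using fe_inv_r[of "inv_word x"] by simp

lemma conj_pre:
  "freely_eq (x @ concat (map (\<lambda>(x, r). x @ r @ inv_word x) cs) @ inv_word x)
             (concat (map (\<lambda>(x, r). x @ r @ inv_word x) (map (\<lambda>(z,r). (x@z, r)) cs)))"
proof (induction cs)
  case Nil then show ?case using fe_inv_r[of x] by simp
next
  case (Cons zr cs)
  obtain z r where zr: "zr = (z,r)" by (cases zr)
  let ?C = "concat (map (\<lambda>(x, r). x @ r @ inv_word x) cs)"
  let ?D = "concat (map (\<lambda>(x, r). x @ r @ inv_word x) (map (\<lambda>(z,r). (x@z, r)) cs))"
  have 1: "freely_eq (x @ (z @ r @ inv_word z) @ ?C @ inv_word x) ((x @ z @ r @ inv_word z) @ (inv_word x @ x) @ (?C @ inv_word x))"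
    by (rule fe_sym, rule fe_ctx'[OF fe_inv_l, where a="x @ z @ r @ inv_word z" and c="?C @ inv_word x"]) simp_all
  have 2: "freely_eq ((x @ z @ r @ inv_word z) @ (inv_word x @ x) @ (?C @ inv_word x)) ((x @ z @ r @ inv_word z @ inv_word x) @ ?D @ [])"
    by (rule fe_ctx'[OF Cons.IH, where a="x @ z @ r @ inv_word z @ inv_word x" and c="[]"]) simp_all
  show ?case using fe_trans[OF 1 2] zr by simp
qed

lemma ad_comb:
  assumes a1: "area_decomp R w m1" and a2: "area_decomp R (x@y) m2"
  shows "area_decomp R (x@w@y) (m1+m2)"
proof -
  let ?f = "(\<lambda>(x, r). x @ r @ inv_word x) :: 'a word \<times> 'a word \<Rightarrow> 'a word"
  from a1 obtain cs1 where c1: "length cs1 = m1" "\<forall>(x, r)\<in>set cs1. r \<in> R \<or> inv_word r \<in> R"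
     "freely_eq w (concat (map ?f cs1))" unfolding area_decomp_def by blast
  from a2 obtain cs2 where c2: "length cs2 = m2" "\<forall>(x, r)\<in>set cs2. r \<in> R \<or> inv_word r \<in> R"
     "freely_eq (x@y) (concat (map ?f cs2))" unfolding area_decomp_def by blast
  let ?C1 = "concat (map ?f cs1)"
  let ?C2 = "concat (map ?f cs2)"
  let ?D1 = "concat (map ?f (map (\<lambda>(z,r). (x@z, r)) cs1))"
  let ?cs = "map (\<lambda>(z,r). (x@z, r)) cs1 @ cs2"
  have s1: "freely_eq (x@w@y) (x@?C1@y)" by (rule fe_ctx[OF c1(3)])
  have s2: "freely_eq (x@?C1@y) (x @ ?C1 @ inv_word x @ x @ y)"
    by (rule fe_sym, rule fe_ctx'[OF fe_inv_l, where a="x@?C1" and c=y]) simp_all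
  have s3: "freely_eq (x @ ?C1 @ inv_word x @ x @ y) (?D1 @ x @ y)"
    by (rule fe_ctx'[OF conj_pre, where a="[]" and c="x@y"]) simp_all
  have s4: "freely_eq (?D1 @ x @ y) (?D1 @ ?C2)"
    by (rule fe_ctx'[OF c2(3), where a="?D1" and c="[]"]) simp_all
  have "freely_eq (x@w@y) (concat (map ?f ?cs))"
    using fe_trans[OF fe_trans[OF fe_trans[OF s1 s2] s3] s4] by simp
  moreover have "length ?cs = m1 + m2" using c1 c2 by simp
  moreover have "\<forall>(x, r)\<in>set ?cs. r \<in> R \<or> inv_word r \<in> R" using c1(2) c2(2) by auto
  ultimately show ?thesis unfolding area_decomp_def by blast
qed

definition AD :: "'a word set \<Rightarrow> 'a word \<Rightarrow> nat \<Rightarrow> bool" where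
  "AD R w B \<longleftrightarrow> (\<exists>m\<le>B. area_decomp R w m)"

definition rok :: "'a word set \<Rightarrow> 'a word \<Rightarrow> bool" where
  "rok R r \<longleftrightarrow> r \<in> R \<or> inv_word r \<in> R"

lemma AD_nil: "AD R [] 0"
  unfolding AD_def area_decomp_def
  by (rule exI[of _ 0]) (auto intro!: exI[of _ "[]"] simp: fe_refl)

lemma AD_mono: "AD R w B \<Longrightarrow> B \<le> B' \<Longrightarrow> AD R w B'"
  unfolding AD_def using le_trans by blast

lemma AD_fe: "freely_eq w w' \<Longrightarrow> AD R w' B \<Longrightarrow> AD R w B"
  unfolding AD_def area_decomp_def using fe_trans by blast

lemma AD_rel: "rok R r \<Longrightarrow> AD R r 1"
  unfolding AD_def area_decomp_def rok_def
  apply (rule exI[of _ 1], simp)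
  apply (rule exI[of _ "[([], r)]"]) by (simp add: fe_refl)

lemma AD_comb: "AD R w B1 \<Longrightarrow> AD R (x@y) B2 \<Longrightarrow> AD R (x@w@y) (B1+B2)"
  unfolding AD_def using ad_comb by (meson add_mono)

lemma AD_ins: "rok R r \<Longrightarrow> AD R (x@y) B \<Longrightarrow> AD R (x@r@y) (B+1)"
  using AD_comb[OF AD_rel] by (metis add.commute)

lemma AD_Area: "AD R w B \<Longrightarrow> Area R w \<le> enat B"
  unfolding AD_def Area_def
  by (auto intro: INF_lower2)


lemma rep_Suc': "replicate (Suc k) w = replicate k w @ [w]"
  by (simp add: replicate_append_same)

lemma commute1:
  assumes "rok R [(x,b),(y,b),(z,b)]" "rok R [(z,\<not>b),(x,\<not>b),(y,\<not>b)]"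
      and "AD R (a @ [(y,b),(x,b)] @ c) B"
  shows "AD R (a @ [(x,b),(y,b)] @ c) (B+2)"
proof -
  have "AD R (a @ [(z,\<not>b),(x,\<not>b),(y,\<not>b)] @ ([(y,b),(x,b)] @ c)) (B+1)"
    using AD_ins[OF assms(2), of a "[(y,b),(x,b)] @ c"] assms(3) by simp
  then have h: "AD R (a @ [(x,b),(y,b),(z,b)] @ ([(z,\<not>b),(x,\<not>b),(y,\<not>b)] @ [(y,b),(x,b)] @ c)) (B+1+1)"
    using AD_ins[OF assms(1), of a "[(z,\<not>b),(x,\<not>b),(y,\<not>b)] @ [(y,b),(x,b)] @ c"] by simp
  have c1: "cancel_step (a @ [(x,b),(y,b),(z,b)] @ [(z,\<not>b),(x,\<not>b),(y,\<not>b)] @ [(y,b),(x,b)] @ c)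
                        (a @ [(x,b),(y,b),(x,\<not>b),(y,\<not>b),(y,b),(x,b)] @ c)"
    by (rule cs_intro[where xs="a@[(x,b),(y,b)]" and x=z and b=b and ys="[(x,\<not>b),(y,\<not>b),(y,b),(x,b)] @ c"]) simp_all
  have c2: "cancel_step (a @ [(x,b),(y,b),(x,\<not>b),(y,\<not>b),(y,b),(x,b)] @ c)
                        (a @ [(x,b),(y,b),(x,\<not>b),(x,b)] @ c)"
    by (rule cs_intro[where xs="a@[(x,b),(y,b),(x,\<not>b)]" and x=y and b="\<not>b" and ys="[(x,b)] @ c"]) simp_all
  have c3: "cancel_step (a @ [(x,b),(y,b),(x,\<not>b),(x,b)] @ c) (a @ [(x,b),(y,b)] @ c)"
    by (rule cs_intro[where xs="a@[(x,b),(y,b)]" and x=x and b="\<not>b" and ys="c"]) simp_all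
  have "freely_eq (a @ [(x,b),(y,b)] @ c) (a @ [(x,b),(y,b),(z,b)] @ ([(z,\<not>b),(x,\<not>b),(y,\<not>b)] @ [(y,b),(x,b)] @ c))"
    using fe_sym[OF fe_trans[OF fe_trans[OF fe_cancel[OF c1] fe_cancel[OF c2]] fe_cancel[OF c3]]] by simp
  from AD_fe[OF this h] show ?thesis by simp
qed

lemma commute_j:
  assumes "rok R [(x,b),(y,b),(z,b)]" "rok R [(z,\<not>b),(x,\<not>b),(y,\<not>b)]"
  shows "AD R (a @ replicate j (y,b) @ [(x,b)] @ c) B \<Longrightarrow> AD R (a @ [(x,b)] @ replicate j (y,b) @ c) (B + 2*j)"
proof (induction j arbitrary: a)
  case 0 then show ?case by simp
next
  case (Suc j)
  have "AD R ((a @ [(y,b)]) @ [(x,b)] @ replicate j (y,b) @ c) (B + 2*j)"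
    by (rule Suc.IH) (use Suc.prems in simp)
  then have "AD R (a @ [(y,b),(x,b)] @ (replicate j (y,b) @ c)) (B + 2*j)" by simp
  from commute1[OF assms this] show ?case by simp
qed

lemma triangle:
  assumes "rok R [(y,b),(z,b),(x,b)]" "rok R [(x,b),(y,b),(z,b)]" "rok R [(z,\<not>b),(x,\<not>b),(y,\<not>b)]"
  shows "AD R (replicate k (x,b) @ replicate k (y,b) @ replicate k (z,b)) (k*k)"
proof (induction k)
  case 0 then show ?case by (simp add: AD_nil)
next
  case (Suc k)
  let ?X = "(x,b)" and ?Y = "(y,b)" and ?Z = "(z,b)" and ?Xb = "(x,\<not>b)"
  have f1: "freely_eq (replicate k ?X @ replicate k ?Y @ [?X] @ ([?Xb] @ replicate k ?Z))
                      (replicate k ?X @ replicate k ?Y @ replicate k ?Z)"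
    by (rule fe_cancel, rule cs_intro[where xs="replicate k ?X @ replicate k ?Y" and x=x and b=b]) simp_all
  have a1: "AD R (replicate k ?X @ replicate k ?Y @ [?X] @ ([?Xb] @ replicate k ?Z)) (k*k)"
    by (rule AD_fe[OF f1 Suc.IH])
  have a2: "AD R (replicate k ?X @ [?X] @ replicate k ?Y @ ([?Xb] @ replicate k ?Z)) (k*k + 2*k)"
    by (rule commute_j[OF assms(2,3) a1])
  have a3: "AD R ((replicate k ?X @ [?X] @ replicate k ?Y) @ [?Y,?Z,?X] @ ([?Xb] @ replicate k ?Z)) (k*k + 2*k + 1)"
    by (rule AD_ins[OF assms(1)]) (use a2 in simp)
  have f2: "freely_eq (replicate k ?X @ [?X] @ replicate k ?Y @ [?Y, ?Z] @ replicate k ?Z)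
              ((replicate k ?X @ [?X] @ replicate k ?Y) @ [?Y,?Z,?X] @ ([?Xb] @ replicate k ?Z))"
    by (rule fe_sym, rule fe_cancel, rule cs_intro[where xs="replicate k ?X @ [?X] @ replicate k ?Y @ [?Y, ?Z]" and x=x and b=b]) simp_all
  have "AD R (replicate k ?X @ [?X] @ replicate k ?Y @ [?Y, ?Z] @ replicate k ?Z) (Suc k * Suc k)"
  proof -
    have eq: "k*k + 2*k + 1 = Suc k * Suc k" by simp
    show ?thesis using AD_fe[OF f2 a3, unfolded eq] by simp
  qed
  then show ?case unfolding rep_Suc'[of k ?X] rep_Suc'[of k ?Y] by simp
qed

lemma junction_letter:
  assumes "rok R [(x,b),(x',b)]"
  shows "AD R (a@c) B \<Longrightarrow> AD R (a @ replicate j (x,b) @ replicate j (x',b) @ c) (B + j)"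
proof (induction j)
  case 0 then show ?case by simp
next
  case (Suc j)
  have "AD R ((a @ replicate j (x,b)) @ [(x,b),(x',b)] @ (replicate j (x',b) @ c)) (B + j + 1)"
    by (rule AD_ins[OF assms]) (use Suc in simp)
  then show ?case unfolding rep_Suc'[of j "(x,b)"] by simp
qed

lemma lpow_alt: "lpow x m = replicate (nat \<bar>m\<bar>) (x, 0 \<le> m)"
  by (simp add: lpow_def)

lemma rev_edge_rev[simp]: "rev_edge (rev_edge x) = x"
  by (simp add: rev_edge_def)

lemma Edge_rev: "x \<in> Edge \<Delta> \<Longrightarrow> rev_edge x \<in> Edge \<Delta>"
  by (auto simp: Edge_def rev_edge_def insert_commute)

lemma rok_edge: "x \<in> Edge \<Delta> \<Longrightarrow> rok (relators_H \<Delta>) [(x,b),(rev_edge x,b)]"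
proof (cases b)
  case True
  assume "x \<in> Edge \<Delta>"
  then show ?thesis using True unfolding rok_def relators_H_def by blast
next
  case False
  assume x: "x \<in> Edge \<Delta>"
  have "[(rev_edge x, True), (rev_edge (rev_edge x), True)] \<in> relators_H \<Delta>"
    using Edge_rev[OF x] unfolding relators_H_def by blast
  then show ?thesis using False unfolding rok_def by simp
qed

lemma junction_letter_lpow:
  assumes "x \<in> Edge \<Delta>" "AD (relators_H \<Delta>) (a@c) B"
  shows "AD (relators_H \<Delta>) (a @ lpow x n @ lpow (rev_edge x) n @ c) (B + nat \<bar>n\<bar>)"
  unfolding lpow_alt by (rule junction_letter[OF rok_edge[OF assms(1)] assms(2)])

lemma junction:
  assumes "set xs \<subseteq> Edge \<Delta>"
  shows "AD (relators_H \<Delta>) (a@c) B \<Longrightarrow>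
    AD (relators_H \<Delta>) (a @ concat (map (\<lambda>e. lpow e n) xs) @ concat (map (\<lambda>e. lpow e n) (rev (map rev_edge xs))) @ c) (B + nat \<bar>n\<bar> * length xs)"
  using assms
proof (induction xs arbitrary: a c B)
  case Nil then show ?case by simp
next
  case (Cons x xs)
  have h: "AD (relators_H \<Delta>) ((a @ lpow x n) @ (lpow (rev_edge x) n @ c)) (B + nat \<bar>n\<bar>)"
    using junction_letter_lpow[OF _ Cons.prems(1), of x n] Cons.prems(2) by simp
  have "AD (relators_H \<Delta>) ((a @ lpow x n) @ concat (map (\<lambda>e. lpow e n) xs) @ concat (map (\<lambda>e. lpow e n) (rev (map rev_edge xs))) @ (lpow (rev_edge x) n @ c)) (B + nat \<bar>n\<bar> + nat \<bar>n\<bar> * length xs)"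
    by (rule Cons.IH[OF h]) (use Cons.prems in simp)
  then show ?case by (simp add: algebra_simps)
qed

lemma relb: "comb_cycle3 \<Delta> x y z \<Longrightarrow> [(x,b),(y,b),(z,b)] \<in> relators_H \<Delta>"
  unfolding relators_H_def by (cases b) blast+

lemma cyc_rot: "comb_cycle3 \<Delta> e f g \<Longrightarrow> comb_cycle3 \<Delta> f g e"
  unfolding comb_cycle3_def by auto

lemma triangle_lpow:
  assumes "comb_cycle3 \<Delta> e f g"
  shows "AD (relators_H \<Delta>) (lpow e k @ lpow f k @ lpow g k) (nat \<bar>k\<bar> * nat \<bar>k\<bar>)"
proof -
  have c2: "comb_cycle3 \<Delta> f g e" using cyc_rot[OF assms] .
  have c3: "comb_cycle3 \<Delta> g e f" using cyc_rot[OF c2] .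
  show ?thesis unfolding lpow_alt
    by (rule triangle) (simp_all add: rok_def relb[OF c2] relb[OF assms] relb[OF c3])
qed


fun walk :: "'v edge set \<Rightarrow> 'v \<Rightarrow> 'v edge list \<Rightarrow> 'v \<Rightarrow> bool" where
  "walk T u [] v = (u = v)"
| "walk T u (e#es) v = (e \<in> T \<and> fst e = u \<and> walk T (snd e) es v)"

lemma ep_cons2: "edge_path T u v (e#f#fs) \<longleftrightarrow> (e \<in> T \<and> fst e = u \<and> edge_path T (snd e) v (f#fs))"
proof -
  have c: "chain (e#f#fs) = (snd e = fst f \<and> chain (f#fs))" by simp
  have l: "last (e#f#fs) = last (f#fs)" by simp
  have s: "(set (e#f#fs) \<subseteq> T) = (e \<in> T \<and> set (f#fs) \<subseteq> T)" by simp
  have n: "(e#f#fs = []) = False" "(f#fs = []) = False" by simp_all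
  show ?thesis unfolding edge_path_def c l s n if_False list.sel by argo
qed

lemma edge_path_walk: "edge_path T u v es = walk T u es v"
proof (induction es arbitrary: u)
  case Nil then show ?case by (simp add: edge_path_def)
next
  case (Cons e es)
  note IH = Cons.IH
  show ?case
  proof (cases es)
    case Nil then show ?thesis by (simp add: edge_path_def)
  next
    case (Cons f fs)
    then show ?thesis using IH[of "snd e"] ep_cons2[of T u v e f fs] by simp
  qed
qed

lemma walk_append: "walk T u (xs@ys) v \<longleftrightarrow> (\<exists>w. walk T u xs w \<and> walk T w ys v)"
  by (induction xs arbitrary: u) auto

lemma walk_set: "walk T u xs v \<Longrightarrow> set xs \<subseteq> T"
  by (induction xs arbitrary: u) auto

lemma walk_rev: "\<forall>e\<in>T. rev_edge e \<in> T \<Longrightarrow> walk T u xs v \<Longrightarrow> walk T v (rev (map rev_edge xs)) u"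
proof (induction xs arbitrary: u)
  case Nil then show ?case by simp
next
  case (Cons e xs)
  then have "walk T v (rev (map rev_edge xs)) (snd e)" by simp
  moreover have "walk T (snd e) [rev_edge e] u" using Cons.prems by (auto simp: rev_edge_def)
  ultimately show ?case by (auto simp: walk_append)
qed

lemma nb_Cons: "no_backtrack (e#es) \<Longrightarrow> no_backtrack es"
  by (cases es) auto

lemma nb_append: "no_backtrack (xs@ys) \<longleftrightarrow> no_backtrack xs \<and> no_backtrack ys \<and>
    (xs \<noteq> [] \<longrightarrow> ys \<noteq> [] \<longrightarrow> hd ys \<noteq> rev_edge (last xs))"
proof (induction xs)
  case Nil then show ?case by simp
next
  case (Cons a xs)
  show ?case
  proof (cases xs)
    case Nil then show ?thesis by (cases ys) auto
  next
    case (Cons b xs')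
    then show ?thesis using Cons.IH by auto
  qed
qed

lemma nb_rev: "no_backtrack xs \<Longrightarrow> no_backtrack (rev (map rev_edge xs))"
proof (induction xs rule: no_backtrack.induct)
  case 1 then show ?case by simp
next
  case (2 e) then show ?case by simp
next
  case (3 e f es)
  then have "no_backtrack (rev (map rev_edge (f#es)))" by simp
  moreover have "rev_edge e \<noteq> rev_edge (rev_edge f)" using 3(2) by (auto simp: rev_edge_def)
  ultimately show ?case by (simp add: nb_append last_rev)
qed

lemma backtrack_decomp: "\<not> no_backtrack P \<Longrightarrow> \<exists>xs e ys. P = xs @ [e, rev_edge e] @ ys"
proof (induction P rule: no_backtrack.induct)
  case (3 e f es)
  show ?case
  proof (cases "f = rev_edge e")
    case True then show ?thesis by (intro exI[of _ "[]"] exI[of _ e] exI[of _ es]) simp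
  next
    case False
    with 3 obtain xs e' ys where "f#es = xs @ [e', rev_edge e'] @ ys" by auto
    then show ?thesis by (intro exI[of _ "e#xs"] exI[of _ e'] exI[of _ ys]) simp
  qed
qed auto

lemma nb_unique:
  assumes sym: "\<forall>e\<in>T. rev_edge e \<in> T"
    and acyc: "\<forall>u es. walk T u es u \<and> es \<noteq> [] \<longrightarrow> \<not> no_backtrack es"
  shows "walk T u P v \<Longrightarrow> walk T u P' v \<Longrightarrow> no_backtrack P \<Longrightarrow> no_backtrack P' \<Longrightarrow> P = P'"
proof (induction P arbitrary: u P')
  case Nil
  then have "u = v" by simp
  show ?case
  proof (rule ccontr)
    assume ne: "[] \<noteq> P'"
    have "walk T u P' u" using Nil.prems(2) \<open>u=v\<close> by simp
    with ne Nil.prems(4) acyc[rule_format, of u P'] show False by simp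
  qed
next
  case (Cons a A)
  show ?case
  proof (cases "P' = []")
    case True
    with Cons.prems have "u = v" by simp
    with Cons.prems(1,3) acyc[rule_format, of u "a#A"] show ?thesis by simp
  next
    case False
    then obtain b B where P': "P' = b#B" by (cases P') auto
    show ?thesis
    proof (cases "a = b")
      case True
      have "A = B"
        by (rule Cons.IH[of "snd a"]) (use Cons.prems P' True nb_Cons[of b A] nb_Cons[of b B] in auto)
      then show ?thesis using True P' by simp
    next
      case False
      let ?W = "rev (map rev_edge (b#B)) @ (a#A)"
      have "walk T v (rev (map rev_edge (b#B))) u" using walk_rev[OF sym] Cons.prems(2) P' by blast
      then have w: "walk T v ?W v" using Cons.prems(1) unfolding walk_append by blast
      have "no_backtrack (rev (map rev_edge (b#B)))" using nb_rev Cons.prems(4) P' by blast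
      then have "no_backtrack ?W" using Cons.prems(3) False by (simp add: nb_append last_rev)
      with w acyc[rule_format, of v ?W] show ?thesis by simp
    qed
  qed
qed

lemma min_nb:
  assumes P: "walk T u P v" and Pmin: "\<forall>P'. walk T u P' v \<longrightarrow> length P \<le> length P'"
  shows "no_backtrack P"
proof (rule ccontr)
  assume "\<not> no_backtrack P"
  then obtain xs e ys where eq: "P = xs @ [e, rev_edge e] @ ys" using backtrack_decomp by blast
  then have "walk T u (xs@ys) v" using P by (auto simp: walk_append rev_edge_def)
  then have "length P \<le> length (xs@ys)" using Pmin by blast
  with eq show False by simp
qed

lemma st_parts:
  assumes st: "spanning_tree \<Delta> T"
  shows "T \<subseteq> Edge \<Delta>" "\<forall>e\<in>T. rev_edge e \<in> T"
     "\<forall>u\<in>vertices \<Delta>. \<forall>v\<in>vertices \<Delta>. \<exists>es. walk T u es v"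
     "\<forall>u es. walk T u es u \<and> es \<noteq> [] \<longrightarrow> \<not> no_backtrack es"
proof -
  have stt: "T \<subseteq> Edge \<Delta> \<and> (\<forall>e\<in>T. rev_edge e \<in> T) \<and>
     (\<forall>u\<in>vertices \<Delta>. \<forall>v\<in>vertices \<Delta>. \<exists>es. walk T u es v) \<and>
     (\<forall>u es. walk T u es u \<and> es \<noteq> [] \<longrightarrow> \<not> no_backtrack es)"
    using st unfolding spanning_tree_def edge_path_walk .
  show "T \<subseteq> Edge \<Delta>" by (rule conjunct1[OF stt])
  show "\<forall>e\<in>T. rev_edge e \<in> T" by (rule conjunct1[OF conjunct2[OF stt]])
  show "\<forall>u\<in>vertices \<Delta>. \<forall>v\<in>vertices \<Delta>. \<exists>es. walk T u es v" by (rule conjunct1[OF conjunct2[OF conjunct2[OF stt]]])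
  show "\<forall>u es. walk T u es u \<and> es \<noteq> [] \<longrightarrow> \<not> no_backtrack es" by (rule conjunct2[OF conjunct2[OF conjunct2[OF stt]]])
qed

lemma geod:
  assumes st: "spanning_tree \<Delta> T" and u: "u \<in> vertices \<Delta>" and v: "v \<in> vertices \<Delta>"
  shows "walk T u (tree_geod T u v) v \<and> no_backtrack (tree_geod T u v)"
proof -
  note sym = st_parts(2)[OF st] and acyc = st_parts(4)[OF st] and conn = st_parts(3)[OF st]
  have "\<exists>es. walk T u es v" using conn u v by blast
  then obtain P0 where P0: "walk T u P0 v" by (elim exE)
  have "\<exists>P. walk T u P v \<and> (\<forall>P'. walk T u P' v \<longrightarrow> length P \<le> length P')"
    by (rule ex_has_least_nat[of "\<lambda>P. walk T u P v", OF P0])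
  then obtain P where P: "walk T u P v" and Pmin: "\<forall>P'. walk T u P' v \<longrightarrow> length P \<le> length P'"
    by (elim exE conjE)
  have nbP: "no_backtrack P" by (rule min_nb[OF P Pmin])
  have "tree_geod T u v = P"
    unfolding tree_geod_def edge_path_walk
  proof (rule the_equality)
    show "walk T u P v \<and> (\<forall>es'. walk T u es' v \<longrightarrow> length P \<le> length es')" using P Pmin by (rule conjI)
  next
    fix P' assume h: "walk T u P' v \<and> (\<forall>es'. walk T u es' v \<longrightarrow> length P' \<le> length es')"
    have nb': "no_backtrack P'" by (rule min_nb[OF conjunct1[OF h] conjunct2[OF h]])
    show "P' = P" by (rule nb_unique[OF sym acyc conjunct1[OF h] P nb' nbP])
  qed
  then show ?thesis using P nbP by simp
qed

lemma geod_rev: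
  assumes st: "spanning_tree \<Delta> T" and u: "u \<in> vertices \<Delta>" and v: "v \<in> vertices \<Delta>"
  shows "tree_geod T v u = rev (map rev_edge (tree_geod T u v))"
proof -
  note sym = st_parts(2)[OF st] and acyc = st_parts(4)[OF st]
  have g1: "walk T u (tree_geod T u v) v" "no_backtrack (tree_geod T u v)" using geod[OF st u v] by auto
  have g2: "walk T v (tree_geod T v u) u" "no_backtrack (tree_geod T v u)" using geod[OF st v u] by auto
  show ?thesis
    by (rule nb_unique[OF sym acyc g2(1) walk_rev[OF sym g1(1)] g2(2) nb_rev[OF g1(2)]])
qed

lemma geod_edges:
  assumes st: "spanning_tree \<Delta> T" and u: "u \<in> vertices \<Delta>" and v: "v \<in> vertices \<Delta>"
  shows "set (tree_geod T u v) \<subseteq> Edge \<Delta>"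
  using walk_set[OF conjunct1[OF geod[OF st u v]]] st_parts(1)[OF st] by (rule subset_trans)

lemma geod_len:
  assumes u: "u \<in> vertices \<Delta>" and v: "v \<in> vertices \<Delta>"
  shows "length (tree_geod T u v) \<le> tree_diam \<Delta> (T::('v::finite) edge set)"
proof -
  let ?S = "{length (tree_geod T u v) | u v. u \<in> vertices \<Delta> \<and> v \<in> vertices \<Delta>}"
  have sub: "?S \<subseteq> range (\<lambda>(u,v). length (tree_geod T u v))"
  proof
    fix x assume "x \<in> ?S"
    then obtain a b where x: "x = length (tree_geod T a b)" by blast
    show "x \<in> range (\<lambda>(u,v). length (tree_geod T u v))"
      by (rule image_eqI[of _ _ "(a,b)"]) (simp_all add: x)
  qed
  have fin: "finite ?S" by (rule finite_subset[OF sub]) simp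
  have mem: "length (tree_geod T u v) \<in> ?S" using u v by blast
  show ?thesis unfolding tree_diam_def by (rule Max_ge[OF fin mem])
qed

lemma edge_vertices:
  assumes "simplicial_complex \<Delta>" "x \<in> Edge \<Delta>"
  shows "fst x \<in> vertices \<Delta>" "snd x \<in> vertices \<Delta>"
proof -
  have cl: "\<And>\<sigma> \<tau>. \<sigma> \<in> \<Delta> \<Longrightarrow> \<tau> \<subseteq> \<sigma> \<Longrightarrow> \<tau> \<noteq> {} \<Longrightarrow> \<tau> \<in> \<Delta>"
    using assms(1) unfolding simplicial_complex_def by blast
  have e: "{fst x, snd x} \<in> \<Delta>" using assms(2) unfolding Edge_def by auto
  show "fst x \<in> vertices \<Delta>" unfolding vertices_def using cl[OF e, of "{fst x}"] by simp
  show "snd x \<in> vertices \<Delta>" unfolding vertices_def using cl[OF e, of "{snd x}"] by simp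
qed


lemma arith_final:
  fixes n :: int and j nn l1 l2 l3 L :: nat
  assumes "j = nat \<bar>n+1\<bar>" "nn = nat \<bar>n\<bar>" "l1 \<le> L" "l2 \<le> L" "l3 \<le> L"
  shows "j*j + nn*l1 + nn*l2 + nn*l3 \<le> nat (3 * \<bar>n\<bar>^2 + (3 * int L + 6) * \<bar>n\<bar> + 3)"
proof -
  have hn: "\<bar>n\<bar> = int nn" using assms(2) by simp
  have "3 * \<bar>n\<bar>^2 + (3 * int L + 6) * \<bar>n\<bar> + 3 = int (3*nn^2 + (3*L+6)*nn + 3)"
    unfolding hn by simp
  then have r: "nat (3 * \<bar>n\<bar>^2 + (3 * int L + 6) * \<bar>n\<bar> + 3) = 3*nn^2 + (3*L+6)*nn + 3"
    by (simp only: nat_int)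
  have ij: "int j = \<bar>n+1\<bar>" "int nn = \<bar>n\<bar>" using assms(1,2) by simp_all
  have "int j \<le> int nn + 1" unfolding ij by arith
  then have "int j \<le> int (nn + 1)" by simp
  then have jl: "j \<le> nn + 1" by (simp only: of_nat_le_iff)
  have "j*j \<le> (nn+1)*(nn+1)" by (rule mult_le_mono[OF jl jl])
  moreover have "nn*l1 \<le> nn*L" "nn*l2 \<le> nn*L" "nn*l3 \<le> nn*L" using assms(3-5) by simp_all
  ultimately have "j*j + nn*l1 + nn*l2 + nn*l3 \<le> (nn+1)*(nn+1) + 3*(nn*L)" by linarith
  also have "\<dots> \<le> 3*nn^2 + (3*L+6)*nn + 3" by (simp add: algebra_simps power2_eq_square)
  finally show ?thesis using r by simp
qed

theorem lemma4p4:
  fixes \<Delta> :: "('v::finite) set set"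
    and T :: "'v edge set" and q :: 'v and e f g :: "'v edge"
  assumes "simplicial_complex \<Delta>" and "finite \<Delta>" and "flag \<Delta>"
    and "simply_connected (realization \<Delta>)"
    and "q \<in> vertices \<Delta>" and "spanning_tree \<Delta> T"
    and "comb_cycle3 \<Delta> e f g"
  shows "\<forall>n::int. Area (relators_H \<Delta>) (Phi T q n [(e, True), (f, True), (g, True)])
           \<le> enat (nat (3 * \<bar>n\<bar>^2 + (3 * int (tree_diam \<Delta> T) + 6) * \<bar>n\<bar> + 3))"
proof
  fix n :: int
  note sc = assms(1) and qv = assms(5) and st = assms(6) and cyc = assms(7)
  let ?R = "relators_H \<Delta>"
  let ?G = "tree_geod T"
  let ?P = "\<lambda>xs. concat (map (\<lambda>e. lpow e n) xs)"
  let ?rm = "\<lambda>xs. rev (map rev_edge xs)"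
  let ?E = "lpow e (n+1)" and ?F = "lpow f (n+1)" and ?Gw = "lpow g (n+1)"
  let ?L = "tree_diam \<Delta> T"
  have eE: "e \<in> Edge \<Delta>" "f \<in> Edge \<Delta>" "g \<in> Edge \<Delta>" and
    ch: "snd e = fst f" "snd f = fst g" "snd g = fst e" using cyc unfolding comb_cycle3_def by auto
  have vs: "fst e \<in> vertices \<Delta>" "snd e \<in> vertices \<Delta>" "snd f \<in> vertices \<Delta>"
    using edge_vertices[OF sc eE(1)] edge_vertices[OF sc eE(2)] by auto
  define xs1 where "xs1 = ?G (snd e) q"
  define xs2 where "xs2 = ?G (snd f) q"
  define xs3 where "xs3 = ?G q (fst e)"
  have r1: "?G q (fst f) = ?rm xs1" unfolding xs1_def ch(1)[symmetric] by (rule geod_rev[OF st vs(2) qv])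
  have r2: "?G q (fst g) = ?rm xs2" unfolding xs2_def ch(2)[symmetric] by (rule geod_rev[OF st vs(3) qv])
  have r3: "?G (snd g) q = ?rm xs3" unfolding xs3_def ch(3) by (rule geod_rev[OF st qv vs(1)])
  have ed1: "set xs1 \<subseteq> Edge \<Delta>" unfolding xs1_def by (rule geod_edges[OF st vs(2) qv])
  have ed2: "set xs2 \<subseteq> Edge \<Delta>" unfolding xs2_def by (rule geod_edges[OF st vs(3) qv])
  have ed3: "set xs3 \<subseteq> Edge \<Delta>" unfolding xs3_def by (rule geod_edges[OF st qv vs(1)])
  have l1: "length xs1 \<le> ?L" unfolding xs1_def by (rule geod_len[OF vs(2) qv])
  have l2: "length xs2 \<le> ?L" unfolding xs2_def by (rule geod_len[OF vs(3) qv])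
  have l3: "length xs3 \<le> ?L" unfolding xs3_def by (rule geod_len[OF qv vs(1)])
  define j where "j = nat \<bar>n+1\<bar>"
  define nn where "nn = nat \<bar>n\<bar>"
  have A0: "AD ?R (?E @ (?F @ ?Gw)) (j*j)" unfolding j_def using triangle_lpow[OF cyc] by simp
  have A1: "AD ?R (?E @ ?P xs1 @ ?P (?rm xs1) @ (?F @ ?Gw)) (j*j + nn * length xs1)"
    unfolding nn_def by (rule junction[OF ed1 A0])
  have A2: "AD ?R ((?E @ ?P xs1 @ ?P (?rm xs1) @ ?F) @ ?P xs2 @ ?P (?rm xs2) @ ?Gw) (j*j + nn * length xs1 + nn * length xs2)"
    unfolding nn_def by (rule junction[OF ed2]) (use A1 nn_def in simp)
  have A3: "AD ?R ([] @ ?P xs3 @ ?P (?rm xs3) @ []) (0 + nn * length xs3)"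
    unfolding nn_def by (rule junction[OF ed3]) (simp add: AD_nil)
  have A4: "AD ?R (?P xs3 @ ((?E @ ?P xs1 @ ?P (?rm xs1) @ ?F) @ ?P xs2 @ ?P (?rm xs2) @ ?Gw) @ ?P (?rm xs3))
             (j*j + nn * length xs1 + nn * length xs2 + nn * length xs3)"
    using AD_comb[OF A2, of "?P xs3" "?P (?rm xs3)"] A3 by simp
  have weq: "Phi T q n [(e, True), (f, True), (g, True)] =
     ?P xs3 @ ((?E @ ?P xs1 @ ?P (?rm xs1) @ ?F) @ ?P xs2 @ ?P (?rm xs2) @ ?Gw) @ ?P (?rm xs3)"
    unfolding Phi_def Phi_letter_def p_path_def using r1 r2 r3
    by (simp add: Let_def xs1_def xs2_def xs3_def ch)
  have bnd: "j*j + nn * length xs1 + nn * length xs2 + nn * length xs3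
      \<le> nat (3 * \<bar>n\<bar>^2 + (3 * int ?L + 6) * \<bar>n\<bar> + 3)"
    by (rule arith_final[OF j_def nn_def l1 l2 l3])
  show "Area ?R (Phi T q n [(e, True), (f, True), (g, True)])
           \<le> enat (nat (3 * \<bar>n\<bar>^2 + (3 * int ?L + 6) * \<bar>n\<bar> + 3))"
    unfolding weq by (rule AD_Area[OF AD_mono[OF A4 bnd]])
qed


end
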